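(* Let $(G,+)$ be an abelian group with identity $0$. Let $M$ be a matroid over $G$ and let $N$ be a sparse paving matroid over $G$, both of the same rank $n$, such that $0\notin E(N)$. Assume further that one of the following holds: (1) $|E(M)|<\min\{|E(N)|-1,\,p(G)\}$; or (2) $E(M)$ is not a progression, $G$ is finite, $|E(M)|=|E(N)|-1$ and $|E(N)|<p(G)$; or (3) $E(M)$ is neither a progression nor a semi-progression, $G$ is finite and $|E(M)|=|E(N)|<p(G)$; or (4) $|E(M)|<|E(N)|-n-1$. Then $M$ is matched to $N$.
   Context: $p(G)$ denotes the smallest cardinality of a nonzero subgroup of $G$. A matroid over $G$ is a matroid $M$ whose finite ground set $E(M)$ is a subset of $G$; all matroids are assumed loopless. A matroid of rank $n$ is paving if every $(n-1)$-element subset of its ground set is independent; it is sparse paving if both it and its dual matroid are paving. A progression of length $k$ with difference $x$ and initial term $a$ ($x,a\in G$) is a set $\{a,a+x,\dots,a+(k-1)x\}$; a set $A$ is a semi-progression if $A\setminus\{a\}$ is a progression for some $a\in A$. For matroids $M,N$ over $G$ with $r(M)=r(N)=n>0$ and bases $\mathcal{M}=\{a_1,\dots,a_n\}$ of $M$ and $\mathcal{N}=\{b_1,\dots,b_n\}$ of $N$, $\mathcal{M}$ is matched to $\mathcal{N}$ if there is a permutation $\pi\in S_n$ with $a_i+b_{\pi(i)}\notin E(M)$ for all $i$. $M$ is matched to $N$ if for every basis $\mathcal{M}$ of $M$ there exists a basis $\mathcal{N}$ of $N$ such that $\mathcal{M}$ is matched to $\mathcal{N}$. *)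

theory Defs
  imports Main "HOL-Library.Extended_Nat"
begin

definition matroid :: "'a set \<Rightarrow> ('a set \<Rightarrow> bool) \<Rightarrow> bool" where
  "matroid E I \<longleftrightarrow> finite E \<and> I {} \<and> (\<forall>X. I X \<longrightarrow> X \<subseteq> E)
     \<and> (\<forall>X Y. I X \<and> Y \<subseteq> X \<longrightarrow> I Y)
     \<and> (\<forall>X Y. I X \<and> I Y \<and> card X < card Y \<longrightarrow> (\<exists>y\<in>Y - X. I (insert y X)))"

definition loopless :: "'a set \<Rightarrow> ('a set \<Rightarrow> bool) \<Rightarrow> bool" where
  "loopless E I \<longleftrightarrow> (\<forall>e\<in>E. I {e})"

definition basis :: "'a set \<Rightarrow> ('a set \<Rightarrow> bool) \<Rightarrow> 'a set \<Rightarrow> bool" where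
  "basis E I B \<longleftrightarrow> I B \<and> (\<forall>X. I X \<and> B \<subseteq> X \<longrightarrow> X = B)"

definition mrank :: "'a set \<Rightarrow> ('a set \<Rightarrow> bool) \<Rightarrow> nat" where
  "mrank E I = Max (card ` Collect I)"

definition dual_indep :: "'a set \<Rightarrow> ('a set \<Rightarrow> bool) \<Rightarrow> 'a set \<Rightarrow> bool" where
  "dual_indep E I X \<longleftrightarrow> X \<subseteq> E \<and> (\<exists>B. basis E I B \<and> X \<inter> B = {})"

definition paving :: "'a set \<Rightarrow> ('a set \<Rightarrow> bool) \<Rightarrow> bool" where
  "paving E I \<longleftrightarrow> (\<forall>X. X \<subseteq> E \<and> card X = mrank E I - 1 \<longrightarrow> I X)"

definition sparse_paving :: "'a set \<Rightarrow> ('a set \<Rightarrow> bool) \<Rightarrow> bool" where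
  "sparse_paving E I \<longleftrightarrow> paving E I \<and> paving E (dual_indep E I)"

(* subgroups of an abelian group (type class), and p(G) as an extended natural;
   p(G) = \<infinity> if there is no finite nonzero subgroup *)
definition subgroup_add :: "('a::ab_group_add) set \<Rightarrow> bool" where
  "subgroup_add H \<longleftrightarrow> 0 \<in> H \<and> (\<forall>x\<in>H. \<forall>y\<in>H. x + y \<in> H) \<and> (\<forall>x\<in>H. - x \<in> H)"

definition pG :: "'a::ab_group_add itself \<Rightarrow> enat" where
  "pG _ = (INF H \<in> {H :: 'a set. subgroup_add H \<and> H \<noteq> {0}}.
              (if finite H then enat (card H) else \<infinity>))"

definition nsmul :: "nat \<Rightarrow> 'a::ab_group_add \<Rightarrow> 'a" where
  "nsmul i x = (\<Sum>j<i. x)"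

definition progression :: "('a::ab_group_add) set \<Rightarrow> bool" where
  "progression A \<longleftrightarrow> (\<exists>k x a. A = {a + nsmul i x | i. i < k})"

definition semi_progression :: "('a::ab_group_add) set \<Rightarrow> bool" where
  "semi_progression A \<longleftrightarrow> (\<exists>a\<in>A. progression (A - {a}))"

definition basis_matched :: "('a::ab_group_add) set \<Rightarrow> 'a set \<Rightarrow> 'a set \<Rightarrow> bool" where
  "basis_matched EM A B \<longleftrightarrow> (\<exists>f. bij_betw f A B \<and> (\<forall>a\<in>A. a + f a \<notin> EM))"

definition matched :: "('a::ab_group_add) set \<Rightarrow> ('a set \<Rightarrow> bool) \<Rightarrow> 'a set \<Rightarrow> ('a set \<Rightarrow> bool) \<Rightarrow> bool" where
  "matched EM IM EN IN \<longleftrightarrow>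
     (\<forall>A. basis EM IM A \<longrightarrow> (\<exists>B. basis EN IN B \<and> basis_matched EM A B))"

end

theory Submission
  imports Defs
begin
lemma nsmul_0[simp]: "nsmul 0 x = 0" by (simp add: nsmul_def)
lemma nsmul_Suc: "nsmul (Suc i) x = nsmul i x + x" by (simp add: nsmul_def)
lemma nsmul_1[simp]: "nsmul 1 x = x" by (simp add: nsmul_def)
lemma nsmul_add: "nsmul (i + j) x = nsmul i x + nsmul j x"
  by (induct j) (simp_all add: nsmul_Suc add.assoc)
lemma nsmul_neg: "nsmul i (- x) = - nsmul i (x::'a::ab_group_add)"
  by (induct i) (simp_all add: nsmul_Suc add.commute)
lemma nsmul_mult_zero: "nsmul k x = 0 \<Longrightarrow> nsmul (a * k) x = 0"
  by (induct a) (simp_all add: nsmul_add)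

lemma pG_le_order:
  fixes x :: "'a::ab_group_add"
  assumes "x \<noteq> 0" "k \<ge> 1" "nsmul k x = 0"
  shows "pG TYPE('a) \<le> enat k"
proof -
  let ?H = "range (\<lambda>i. nsmul i x)"
  have md: "nsmul i x = nsmul (i mod k) x" for i
  proof -
    have "nsmul i x = nsmul ((i div k) * k + i mod k) x" by simp
    also have "\<dots> = nsmul (i mod k) x" unfolding nsmul_add using nsmul_mult_zero[OF assms(3)] by simp
    finally show ?thesis .
  qed
  have H: "?H = (\<lambda>i. nsmul i x) ` {..<k}"
  proof
    show "?H \<subseteq> (\<lambda>i. nsmul i x) ` {..<k}"
    proof
      fix y assume "y \<in> ?H"
      then obtain i where "y = nsmul i x" by auto
      then have "y = nsmul (i mod k) x" "i mod k < k" using md assms(2) by auto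
      then show "y \<in> (\<lambda>i. nsmul i x) ` {..<k}" by auto
    qed
    show "(\<lambda>i. nsmul i x) ` {..<k} \<subseteq> ?H" by auto
  qed
  have fin: "finite ?H" by (simp add: H)
  have card: "card ?H \<le> k" unfolding H using card_image_le[of "{..<k}"] by simp
  have sub: "subgroup_add ?H"
    unfolding subgroup_add_def
  proof (intro conjI ballI)
    show "0 \<in> ?H" using nsmul_0 by (metis rangeI)
  next
    fix y z assume "y \<in> ?H" "z \<in> ?H"
    then obtain i j where "y = nsmul i x" "z = nsmul j x" by auto
    then show "y + z \<in> ?H" by (metis nsmul_add rangeI)
  next
    fix y assume "y \<in> ?H"
    then obtain i where y: "y = nsmul i x" by auto
    have "i + (k - 1) * i = k * i" using assms(2)
      by (metis add.commute le_add_diff_inverse2 mult.commute mult_Suc_right plus_1_eq_Suc)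
    then have "nsmul i x + nsmul ((k - 1) * i) x = nsmul (k * i) x" by (metis nsmul_add)
    also have "\<dots> = 0" using nsmul_mult_zero[OF assms(3), of i] by (simp add: mult.commute)
    finally have "- y = nsmul ((k - 1) * i) x" using y by (simp add: add_eq_0_iff)
    then show "- y \<in> ?H" by auto
  qed
  have ne: "?H \<noteq> {0}" using assms(1) by (metis nsmul_1 rangeI singletonD)
  have "pG TYPE('a) \<le> (if finite ?H then enat (card ?H) else \<infinity>)"
    unfolding pG_def by (rule INF_lower) (use sub ne in simp)
  also have "\<dots> \<le> enat k" using fin card by simp
  finally show ?thesis .
qed

lemma pG_le_periodic:
  fixes d :: "'a::ab_group_add"
  assumes "finite R" "r \<in> R" "d \<noteq> 0" "\<And>y. y \<in> R \<Longrightarrow> y + d \<in> R"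
  shows "pG TYPE('a) \<le> enat (card R)"
proof -
  have inR: "r + nsmul i d \<in> R" for i
    by (induct i) (simp_all add: assms nsmul_Suc flip: add.assoc)
  have "\<not> inj_on (\<lambda>i. r + nsmul i d) {..card R}"
  proof
    assume "inj_on (\<lambda>i. r + nsmul i d) {..card R}"
    then have c: "card ((\<lambda>i. r + nsmul i d) ` {..card R}) = Suc (card R)" by (simp add: card_image)
    have "(\<lambda>i. r + nsmul i d) ` {..card R} \<subseteq> R" using inR by auto
    from card_mono[OF assms(1) this] c show False by simp
  qed
  then obtain i j where ij: "i \<le> card R" "j \<le> card R" "i \<noteq> j" "nsmul i d = nsmul j d"
    unfolding inj_on_def by auto
  have "\<exists>i j. i < j \<and> j \<le> card R \<and> nsmul i d = nsmul j d"
  proof (cases "i < j")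
    case True then show ?thesis using ij by blast
  next
    case False then have "j < i" using ij(3) by simp
    then show ?thesis using ij by (intro exI[of _ j] exI[of _ i]) simp
  qed
  then obtain i j where ij: "i < j" "j \<le> card R" "nsmul i d = nsmul j d" by blast
  have "nsmul j d = nsmul i d + nsmul (j - i) d" using nsmul_add[of i "j - i" d] ij(1) by simp
  then have "nsmul (j - i) d = 0" using ij(3) by simp
  then have "pG TYPE('a) \<le> enat (j - i)" using pG_le_order[OF assms(3)] ij(1) by simp
  also have "\<dots> \<le> enat (card R)" using ij by simp
  finally show ?thesis .
qed

definition ss :: "'a::ab_group_add set \<Rightarrow> 'a set \<Rightarrow> 'a set" where
  "ss P Q = (\<lambda>(p,q). p + q) ` (P \<times> Q)"

lemma ss_mem: "x \<in> ss P Q \<longleftrightarrow> (\<exists>p\<in>P. \<exists>q\<in>Q. x = p + q)"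
  unfolding ss_def by auto
lemma ss_finite: "finite P \<Longrightarrow> finite Q \<Longrightarrow> finite (ss P Q)"
  unfolding ss_def by simp
lemma ss_comm: "ss P Q = ss Q (P::'a::ab_group_add set)"
proof -
  have "x \<in> ss P Q \<Longrightarrow> x \<in> ss Q P" for P Q :: "'a set" and x
    unfolding ss_mem by (metis add.commute)
  then show ?thesis by blast
qed
lemma ss_mono: "P \<subseteq> P' \<Longrightarrow> Q \<subseteq> Q' \<Longrightarrow> ss P Q \<subseteq> ss P' Q'"
  unfolding ss_def by auto
lemma card_le_ss: "finite P \<Longrightarrow> finite Q \<Longrightarrow> q \<in> Q \<Longrightarrow> card P \<le> card (ss P Q)"
proof -
  assume a: "finite P" "finite Q" "q \<in> Q"
  have "(\<lambda>p. p + q) ` P \<subseteq> ss P Q"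
  proof
    fix y assume "y \<in> (\<lambda>p. p + q) ` P"
    then obtain p where "p \<in> P" "y = p + q" by auto
    then show "y \<in> ss P Q" using a(3) unfolding ss_mem by blast
  qed
  moreover have "card ((\<lambda>p. p + q) ` P) = card P" by (simp add: card_image inj_on_def)
  ultimately show ?thesis using card_mono[OF ss_finite[OF a(1,2)]] by (metis le_trans eq_imp_le)
qed

lemma transform:
  fixes P Q :: "'a::ab_group_add set"
  assumes "finite P" "finite Q"
  shows "card (P \<union> (\<lambda>x. x + e) ` Q) + card {x\<in>Q. x + e \<in> P} = card P + card Q"
    and "ss (P \<union> (\<lambda>x. x + e) ` Q) {x\<in>Q. x + e \<in> P} \<subseteq> ss P Q"
proof -
  have inj: "inj_on (\<lambda>x. x + e) A" for A by (simp add: inj_on_def)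
  have "(\<lambda>x. x + e) ` {x\<in>Q. x + e \<in> P} = P \<inter> (\<lambda>x. x + e) ` Q" by auto
  hence c1: "card {x\<in>Q. x + e \<in> P} = card (P \<inter> (\<lambda>x. x + e) ` Q)" by (metis card_image inj)
  have c2: "card ((\<lambda>x. x + e) ` Q) = card Q" using inj by (simp add: card_image)
  have fQ: "finite ((\<lambda>x. x + e) ` Q)" using assms(2) by simp
  show "card (P \<union> (\<lambda>x. x + e) ` Q) + card {x\<in>Q. x + e \<in> P} = card P + card Q"
    using card_Un_Int[OF assms(1) fQ] c1 c2 by linarith
  show "ss (P \<union> (\<lambda>x. x + e) ` Q) {x\<in>Q. x + e \<in> P} \<subseteq> ss P Q"
  proof
    fix x assume "x \<in> ss (P \<union> (\<lambda>x. x + e) ` Q) {x\<in>Q. x + e \<in> P}"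
    then obtain p q where pq: "p \<in> P \<union> (\<lambda>x. x + e) ` Q" "q \<in> Q" "q + e \<in> P" "x = p + q"
      by (auto simp: ss_mem)
    show "x \<in> ss P Q"
    proof (cases "p \<in> P")
      case True then show ?thesis using pq by (auto simp: ss_mem)
    next
      case False
      then obtain q0 where "q0 \<in> Q" "p = q0 + e" using pq by auto
      have "x = (q + e) + q0" using pq \<open>p = q0 + e\<close> by (simp add: algebra_simps)
      then show ?thesis using pq \<open>q0 \<in> Q\<close> unfolding ss_mem by blast
    qed
  qed
qed

lemma cauchy_davenport:
  fixes P Q :: "'a::ab_group_add set"
  assumes "finite P" "finite Q" "P \<noteq> {}" "Q \<noteq> {}" "enat (card (ss P Q)) < pG TYPE('a)"
  shows "card P + card Q \<le> card (ss P Q) + 1"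
  using assms
proof (induction "card Q" arbitrary: P Q rule: less_induct)
  case less
  show ?case
  proof (cases "card Q = 1")
    case True
    then obtain q where Q: "Q = {q}" by (auto simp: card_1_singleton_iff)
    have "ss P Q = (\<lambda>p. p + q) ` P" by (auto simp: ss_mem Q)
    moreover have "inj_on (\<lambda>p. p+q) P" by (simp add: inj_on_def)
    ultimately show ?thesis using True by (simp add: card_image)
  next
    case False
    have "card Q \<noteq> 0" using less.prems by simp
    then have "card Q \<ge> 2" using False by linarith
    obtain q1 where q1: "q1 \<in> Q" using less.prems by auto
    have "card (Q - {q1}) \<ge> 1" using \<open>card Q \<ge> 2\<close> q1 less.prems by simp
    then have "Q - {q1} \<noteq> {}" by (metis card.empty not_one_le_zero)
    then obtain q2 where q2: "q2 \<in> Q - {q1}" by blast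
    have q: "q1 \<in> Q" "q2 \<in> Q" "q1 \<noteq> q2" using q1 q2 by auto
    show ?thesis
    proof (cases "\<exists>p\<in>P. \<exists>q\<in>Q. \<exists>q'\<in>Q. q' + (p - q) \<notin> P")
      case True
      then obtain p q q' where pq: "p \<in> P" "q \<in> Q" "q' \<in> Q" "q' + (p - q) \<notin> P" by blast
      define e where "e = p - q"
      define P' where "P' = P \<union> (\<lambda>x. x + e) ` Q"
      define Q' where "Q' = {x\<in>Q. x + e \<in> P}"
      have tr1: "card P' + card Q' = card P + card Q" and tr2: "ss P' Q' \<subseteq> ss P Q"
        unfolding P'_def Q'_def using transform[OF less.prems(1,2), of e] by blast+
      have "q \<in> Q'" using pq unfolding Q'_def e_def by simp
      have "Q' \<subset> Q" using pq unfolding Q'_def e_def by auto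
      then have lt: "card Q' < card Q" using less.prems(2) psubset_card_mono by blast
      have finP': "finite P'" "finite Q'" using less.prems(1,2) unfolding P'_def Q'_def by auto
      have "P' \<noteq> {}" using less.prems(3) unfolding P'_def by auto
      have cle: "card (ss P' Q') \<le> card (ss P Q)"
        using card_mono[OF ss_finite[OF less.prems(1,2)] tr2] .
      then have "enat (card (ss P' Q')) \<le> enat (card (ss P Q))" by simp
      then have "enat (card (ss P' Q')) < pG TYPE('a)" using less.prems(5) by (rule le_less_trans)
      then have "card P' + card Q' \<le> card (ss P' Q') + 1"
        using less.hyps[OF lt finP'] \<open>P' \<noteq> {}\<close> \<open>q \<in> Q'\<close> by blast
      then show ?thesis using tr1 cle by linarith
    next
      case False
      have per: "y + (q1 - q2) \<in> P" if "y \<in> P" for y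
      proof -
        have "q1 + (y - q2) \<in> P" using False that q by blast
        moreover have "y + (q1 - q2) = q1 + (y - q2)" by (simp add: algebra_simps)
        ultimately show ?thesis by metis
      qed
      obtain p0 where "p0 \<in> P" using less.prems by auto
      have "q1 - q2 \<noteq> 0" using q by simp
      from pG_le_periodic[OF less.prems(1) \<open>p0 \<in> P\<close> this per]
      have "pG TYPE('a) \<le> enat (card P)" .
      moreover have "card P \<le> card (ss P Q)" using card_le_ss less.prems(1,2) q(1) by blast
      ultimately have "pG TYPE('a) \<le> enat (card (ss P Q))" by (simp add: order_trans)
      then show ?thesis using leD less.prems(5) by blast
    qed
  qed
qed

lemma pG_le_diff:
  fixes d :: "'a::ab_group_add"
  assumes "d \<noteq> 0" "i < j" "nsmul i d = nsmul j d"
  shows "pG TYPE('a) \<le> enat (j - i)"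
proof -
  have "nsmul j d = nsmul i d + nsmul (j - i) d" using nsmul_add[of i "j - i" d] assms(2) by simp
  then have "nsmul (j - i) d = 0" using assms(3) by simp
  then show ?thesis using pG_le_order[OF assms(1)] assms(2) by simp
qed

lemma nsmul_inj:
  fixes d :: "'a::ab_group_add"
  assumes "d \<noteq> 0" "enat k < pG TYPE('a)" "i \<le> k" "j \<le> k" "nsmul i d = nsmul j d"
  shows "i = j"
proof (rule ccontr)
  assume "i \<noteq> j"
  then consider "i < j" | "j < i" by linarith
  then show False
  proof cases
    case 1
    then have "pG TYPE('a) \<le> enat (j - i)" using pG_le_diff assms by blast
    moreover have "enat (j - i) \<le> enat k" using assms by simp
    ultimately show False using assms(2) by (metis leD order_trans)
  next
    case 2
    then have "pG TYPE('a) \<le> enat (i - j)" using pG_le_diff assms by metis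
    moreover have "enat (i - j) \<le> enat k" using assms by simp
    ultimately show False using assms(2) by (metis leD order_trans)
  qed
qed

lemma walk_exit:
  fixes d :: "'a::ab_group_add"
  assumes "finite P" "y \<in> P" "d \<noteq> 0" "enat (card P) < pG TYPE('a)"
  shows "\<exists>j. y + nsmul j d \<notin> P"
proof (rule ccontr)
  assume "\<not> ?thesis"
  then have all: "y + nsmul j d \<in> P" for j by blast
  let ?R = "range (\<lambda>j. y + nsmul j d)"
  have sub: "?R \<subseteq> P" using all by auto
  have fin: "finite ?R" using finite_subset[OF sub assms(1)] .
  have "pG TYPE('a) \<le> enat (card ?R)"
  proof (rule pG_le_periodic[OF fin _ assms(3)])
    have "y = y + nsmul 0 d" by simp
    then show "y \<in> ?R" by (metis rangeI)
  next
    fix z assume "z \<in> ?R" then obtain j where "z = y + nsmul j d" by auto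
    then have "z + d = y + nsmul (Suc j) d" by (simp add: nsmul_Suc add.assoc)
    then show "z + d \<in> ?R" by (metis rangeI)
  qed
  moreover have "enat (card ?R) \<le> enat (card P)" using card_mono[OF assms(1) sub] by simp
  ultimately show False using assms(4) by (metis leD order_trans)
qed

lemma base_two:
  fixes d :: "'a::ab_group_add"
  assumes fin: "finite P" and d: "d \<noteq> 0" and c: "card (P \<union> (\<lambda>x. x + d) ` P) = card P + 1"
    and small: "enat (card P) < pG TYPE('a)"
  shows "\<exists>z. P \<union> (\<lambda>x. x + d) ` P = (\<lambda>j. z + nsmul j (- d)) ` {..card P}"
proof -
  let ?D = "(\<lambda>x. x + d) ` P"
  have finD: "finite ?D" using fin by simp
  have "P \<union> ?D = P \<union> (?D - P)" by blast
  then have "card (P \<union> ?D) = card P + card (?D - P)"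
    using card_Un_disjoint[OF fin, of "?D - P"] finD by simp
  then have "card (?D - P) = 1" using c by simp
  then obtain z where z: "?D - P = {z}" by (auto simp: card_1_singleton_iff)
  have U: "P \<union> ?D = insert z P" using z by auto
  have sub: "insert z P \<subseteq> (\<lambda>j. z + nsmul j (- d)) ` {..card P}"
  proof
    fix y assume y: "y \<in> insert z P"
    show "y \<in> (\<lambda>j. z + nsmul j (- d)) ` {..card P}"
    proof (cases "y = z")
      case True
      then have "y = z + nsmul 0 (- d)" by simp
      then show ?thesis by force
    next
      case False
      then have yP: "y \<in> P" using y by simp
      have ex: "\<exists>j. y + nsmul j d \<notin> P" using walk_exit[OF fin yP d small] .
      define j where "j = (LEAST j. y + nsmul j d \<notin> P)"
      have jout: "y + nsmul j d \<notin> P" unfolding j_def using ex by (rule LeastI_ex)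
      have jin: "y + nsmul i d \<in> P" if "i < j" for i
        using not_less_Least[of i "\<lambda>j. y + nsmul j d \<notin> P"] that unfolding j_def by blast
      have "j \<noteq> 0" using jout yP by (metis add_0_right nsmul_0)
      then obtain i where ji: "j = Suc i" by (metis not0_implies_Suc)
      have "y + nsmul i d \<in> P" using jin ji by simp
      moreover have "y + nsmul j d = (y + nsmul i d) + d" using ji by (simp add: nsmul_Suc add.assoc)
      ultimately have "y + nsmul j d \<in> ?D" by blast
      then have yz: "y + nsmul j d = z" using z jout by blast
      have jle: "j \<le> card P"
      proof (rule ccontr)
        assume "\<not> j \<le> card P"
        then have "\<forall>i\<le>card P. y + nsmul i d \<in> P" using jin by auto
        then have isub: "(\<lambda>i. y + nsmul i d) ` {..card P} \<subseteq> P" by auto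
        have "inj_on (\<lambda>i. y + nsmul i d) {..card P}"
        proof (rule inj_onI)
          fix i1 i2 assume "i1 \<in> {..card P}" "i2 \<in> {..card P}" "y + nsmul i1 d = y + nsmul i2 d"
          then show "i1 = i2" using nsmul_inj[OF d small] by simp
        qed
        then have "card ((\<lambda>i. y + nsmul i d) ` {..card P}) = Suc (card P)" by (simp add: card_image)
        with card_mono[OF fin isub] show False by simp
      qed
      have "z + nsmul j (- d) = y" unfolding yz[symmetric] nsmul_neg by simp
      then show ?thesis using jle by force
    qed
  qed
  have fimg: "finite ((\<lambda>j. z + nsmul j (- d)) ` {..card P})" by simp
  have cimg: "card ((\<lambda>j. z + nsmul j (- d)) ` {..card P}) \<le> card P + 1"
    using card_image_le[of "{..card P}" "\<lambda>j. z + nsmul j (- d)"] by simp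
  have "card (insert z P) = card P + 1" using c U by simp
  then have "insert z P = (\<lambda>j. z + nsmul j (- d)) ` {..card P}"
    using card_seteq[OF fimg sub] cimg by simp
  then show ?thesis using U by blast
qed

lemma prog_image: "progression ((\<lambda>j. a + nsmul j x) ` {..c})"
  unfolding progression_def
  by (rule exI[of _ "Suc c"], rule exI[of _ x], rule exI[of _ a]) (auto simp: less_Suc_eq_le)

lemma vl_base:
  fixes P Q :: "'a::ab_group_add set"
  assumes "finite P" "card Q = 2" "card P + card Q = card (ss P Q) + 1"
    "enat (card (ss P Q)) < pG TYPE('a)"
  shows "progression (ss P Q)"
proof -
  obtain q1 q2 where Q: "Q = {q1, q2}" "q1 \<noteq> q2" using assms(2) by (auto simp: card_2_iff)
  define d where "d = q2 - q1"
  have d: "d \<noteq> 0" using Q d_def by simp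
  have eq: "ss P Q = (\<lambda>x. x + q1) ` (P \<union> (\<lambda>x. x + d) ` P)"
  proof
    show "ss P Q \<subseteq> (\<lambda>x. x + q1) ` (P \<union> (\<lambda>x. x + d) ` P)"
    proof
      fix x assume "x \<in> ss P Q"
      then obtain p q where pq: "p \<in> P" "q \<in> Q" "x = p + q" by (auto simp: ss_mem)
      show "x \<in> (\<lambda>x. x + q1) ` (P \<union> (\<lambda>x. x + d) ` P)"
      proof (cases "q = q1")
        case True then show ?thesis using pq by blast
      next
        case False then have "q = q2" using pq Q by blast
        then have "x = (p + d) + q1" using pq d_def by (simp add: algebra_simps)
        then show ?thesis using pq by blast
      qed
    qed
    show "(\<lambda>x. x + q1) ` (P \<union> (\<lambda>x. x + d) ` P) \<subseteq> ss P Q"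
    proof
      fix x assume "x \<in> (\<lambda>x. x + q1) ` (P \<union> (\<lambda>x. x + d) ` P)"
      then obtain y where y: "y \<in> P \<union> (\<lambda>x. x + d) ` P" "x = y + q1" by blast
      show "x \<in> ss P Q"
      proof (cases "y \<in> P")
        case True then show ?thesis using y Q unfolding ss_mem by blast
      next
        case False
        then obtain p where "p \<in> P" "y = p + d" using y by blast
        then have "x = p + q2" using y d_def by (simp add: algebra_simps)
        then show ?thesis using \<open>p \<in> P\<close> Q unfolding ss_mem by blast
      qed
    qed
  qed
  have inj: "inj_on (\<lambda>x. x + q1) A" for A by (simp add: inj_on_def)
  have "card (ss P Q) = card (P \<union> (\<lambda>x. x + d) ` P)" unfolding eq by (simp add: card_image inj)
  then have c: "card (P \<union> (\<lambda>x. x + d) ` P) = card P + 1" using assms(2,3) by simp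
  have "enat (card P) \<le> enat (card (ss P Q))" using c \<open>card (ss P Q) = _\<close> by simp
  then have "enat (card P) < pG TYPE('a)" using assms(4) by (rule le_less_trans)
  from base_two[OF assms(1) d c this] obtain z where
    z: "P \<union> (\<lambda>x. x + d) ` P = (\<lambda>j. z + nsmul j (- d)) ` {..card P}" by blast
  have "ss P Q = (\<lambda>j. (z + q1) + nsmul j (- d)) ` {..card P}"
    unfolding eq z image_image by (simp add: algebra_simps)
  then show ?thesis using prog_image by metis
qed

lemma bad_inj:
  fixes P Q :: "'a::ab_group_add set"
  assumes fP: "finite P" and fQ: "finite Q" and b2: "card Q \<ge> 2"
    and crit: "card P + card Q = card (ss P Q) + 1"
    and small: "enat (card (ss P Q)) < pG TYPE('a)"
    and q: "q \<in> Q" and p0: "p0 \<in> P" and p1: "p1 \<in> P"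
    and c0: "card {x\<in>Q. x + (p0 - q) \<in> P} \<le> 1"
    and c1: "card {x\<in>Q. x + (p1 - q) \<in> P} \<le> 1"
  shows "p0 = p1"
proof -
  define R where "R = (\<lambda>x. x - q) ` (Q - {q})"
  have key: "(\<lambda>x. x + q) ` (P \<union> (\<lambda>x. x + (p - q)) ` Q) = ss P Q \<and>
      (P \<union> (\<lambda>x. x + (p - q)) ` Q) - P = (\<lambda>x. x + p) ` R"
    if pP: "p \<in> P" and cp: "card {x\<in>Q. x + (p - q) \<in> P} \<le> 1" for p
  proof
    define e where "e = p - q"
    define P0 where "P0 = P \<union> (\<lambda>x. x + e) ` Q"
    define Q0 where "Q0 = {x\<in>Q. x + e \<in> P}"
    have "q \<in> Q0" unfolding Q0_def e_def using q pP by simp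
    have fQ0: "finite Q0" unfolding Q0_def using fQ by simp
    have "card Q0 \<le> 1" using cp unfolding Q0_def e_def .
    then have Q0: "Q0 = {q}" using \<open>q \<in> Q0\<close> fQ0
      by (metis card_1_singletonE card_0_eq empty_iff le_SucE le_zero_eq One_nat_def singletonD)
    have tr1: "card P0 + card Q0 = card P + card Q" and tr2: "ss P0 Q0 \<subseteq> ss P Q"
      unfolding P0_def Q0_def using transform[OF fP fQ, of e] by blast+
    have "ss P0 Q0 = (\<lambda>x. x + q) ` P0" unfolding Q0 by (auto simp: ss_mem)
    have inj: "inj_on (\<lambda>x. x + q) A" for A by (simp add: inj_on_def)
    have "card ((\<lambda>x. x + q) ` P0) = card P0" by (simp add: card_image inj)
    then have ceq: "card ((\<lambda>x. x + q) ` P0) = card (ss P Q)" using tr1 crit Q0 by simp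
    show "(\<lambda>x. x + q) ` (P \<union> (\<lambda>x. x + (p - q)) ` Q) = ss P Q"
      using card_seteq[OF ss_finite[OF fP fQ]] tr2 ceq \<open>ss P0 Q0 = _\<close>
      unfolding P0_def e_def by (metis order_refl)
    show "(P \<union> (\<lambda>x. x + (p - q)) ` Q) - P = (\<lambda>x. x + p) ` R"
    proof
      show "(P \<union> (\<lambda>x. x + (p - q)) ` Q) - P \<subseteq> (\<lambda>x. x + p) ` R"
      proof
        fix z assume z: "z \<in> (P \<union> (\<lambda>x. x + (p - q)) ` Q) - P"
        then obtain x where x: "x \<in> Q" "z = x + (p - q)" by blast
        then have "x \<notin> Q0" using z unfolding Q0_def e_def by blast
        then have "x \<noteq> q" using Q0 by blast
        then have "x - q \<in> R" unfolding R_def using x by blast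
        moreover have "z = (x - q) + p" using x by (simp add: algebra_simps)
        ultimately show "z \<in> (\<lambda>x. x + p) ` R" by blast
      qed
      show "(\<lambda>x. x + p) ` R \<subseteq> (P \<union> (\<lambda>x. x + (p - q)) ` Q) - P"
      proof
        fix z assume "z \<in> (\<lambda>x. x + p) ` R"
        then obtain x where x: "x \<in> Q" "x \<noteq> q" "z = (x - q) + p" unfolding R_def by blast
        have z: "z = x + e" unfolding e_def x(3) by (simp add: algebra_simps)
        have "x \<notin> Q0" using x Q0 by blast
        have "z \<notin> P"
        proof
          assume "z \<in> P"
          then have "x \<in> Q0" unfolding Q0_def using x(1) z by simp
          with \<open>x \<notin> Q0\<close> show False by simp
        qed
        moreover have "z \<in> (\<lambda>x. x + (p - q)) ` Q" using x z e_def by blast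
        ultimately show "z \<in> (P \<union> (\<lambda>x. x + (p - q)) ` Q) - P" by blast
      qed
    qed
  qed
  note k0 = key[OF p0 c0] and k1 = key[OF p1 c1]
  have injq: "inj (\<lambda>x. x + q)" by (simp add: inj_on_def)
  have "(\<lambda>x. x + q) ` (P \<union> (\<lambda>x. x + (p0 - q)) ` Q) = (\<lambda>x. x + q) ` (P \<union> (\<lambda>x. x + (p1 - q)) ` Q)"
    using k0 k1 by simp
  then have eqA: "P \<union> (\<lambda>x. x + (p0 - q)) ` Q = P \<union> (\<lambda>x. x + (p1 - q)) ` Q"
    by (simp add: inj_image_eq_iff[OF injq])
  have RR: "(\<lambda>x. x + p0) ` R = (\<lambda>x. x + p1) ` R"
    using conjunct2[OF k0] conjunct2[OF k1] eqA by simp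
  show "p0 = p1"
  proof (rule ccontr)
    assume ne: "p0 \<noteq> p1"
    define d where "d = p1 - p0"
    have d: "d \<noteq> 0" using ne d_def by simp
    have per: "r + d \<in> R" if "r \<in> R" for r
    proof -
      have "r + p1 \<in> (\<lambda>x. x + p0) ` R" using RR that by blast
      then obtain r' where "r' \<in> R" and eq: "r + p1 = r' + p0" by blast
      have "r' = (r + p1) - p0" using eq by (metis add_diff_cancel)
      moreover have "r + d = (r + p1) - p0" unfolding d_def by (simp add: algebra_simps)
      ultimately have "r + d = r'" by simp
      then show ?thesis using \<open>r' \<in> R\<close> by simp
    qed
    have "card (Q - {q}) \<ge> 1" using b2 q fQ by simp
    then have "Q - {q} \<noteq> {}" by (metis card.empty not_one_le_zero)
    then obtain x where "x \<in> Q - {q}" by blast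
    then have xR: "x - q \<in> R" unfolding R_def by blast
    have fR: "finite R" unfolding R_def using fQ by simp
    have "pG TYPE('a) \<le> enat (card R)" using pG_le_periodic[OF fR xR d per] .
    moreover have "card R \<le> card (Q - {q})" unfolding R_def by (rule card_image_le) (use fQ in simp)
    moreover have "card (Q - {q}) \<le> card Q" using fQ by (simp add: card_mono)
    moreover have "card Q \<le> card (ss P Q)" using card_le_ss[OF fQ fP p0] ss_comm by metis
    ultimately have "pG TYPE('a) \<le> enat (card (ss P Q))" by (meson enat_ord_simps(1) order_trans)
    then show False using small leD by blast
  qed
qed

lemma vl_aux:
  fixes P Q :: "'a::ab_group_add set"
  assumes "finite P" "finite Q" "card Q \<ge> 2" "card Q \<le> card P"
    "card P + card Q = card (ss P Q) + 1" "enat (card (ss P Q)) < pG TYPE('a)"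
  shows "progression (ss P Q)"
  using assms
proof (induction "card Q" arbitrary: P Q rule: less_induct)
  case less
  note fP = less.prems(1) and fQ = less.prems(2) and b2 = less.prems(3) and ba = less.prems(4)
    and crit = less.prems(5) and small = less.prems(6)
  show ?case
  proof (cases "card Q = 2")
    case True then show ?thesis using vl_base fP crit small by blast
  next
    case False
    then have b3: "card Q \<ge> 3" using b2 by linarith
    have Pne: "P \<noteq> {}" using ba b3 by auto
    have Qne: "Q \<noteq> {}" using b3 by auto
    show ?thesis
    proof (cases "\<exists>e. 2 \<le> card {x\<in>Q. x + e \<in> P} \<and> card {x\<in>Q. x + e \<in> P} < card Q")
      case True
      then obtain e where e: "2 \<le> card {x\<in>Q. x + e \<in> P}" "card {x\<in>Q. x + e \<in> P} < card Q" by blast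
      define P' where "P' = P \<union> (\<lambda>x. x + e) ` Q"
      define Q' where "Q' = {x\<in>Q. x + e \<in> P}"
      have tr1: "card P' + card Q' = card P + card Q" and tr2: "ss P' Q' \<subseteq> ss P Q"
        unfolding P'_def Q'_def using transform[OF fP fQ, of e] by blast+
      have fin': "finite P'" "finite Q'" unfolding P'_def Q'_def using fP fQ by auto
      have cle: "card (ss P' Q') \<le> card (ss P Q)" using card_mono[OF ss_finite[OF fP fQ] tr2] .
      then have "enat (card (ss P' Q')) \<le> enat (card (ss P Q))" by simp
      then have small': "enat (card (ss P' Q')) < pG TYPE('a)" using small by (rule le_less_trans)
      have "Q' \<noteq> {}" using e(1) unfolding Q'_def by (metis card.empty not_numeral_le_zero)
      moreover have "P' \<noteq> {}" using Pne unfolding P'_def by blast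
      ultimately have cd: "card P' + card Q' \<le> card (ss P' Q') + 1"
        using cauchy_davenport[OF fin' _ _ small'] by blast
      have "card (ss P' Q') = card (ss P Q)" using cd tr1 crit cle by linarith
      then have eqss: "ss P' Q' = ss P Q" using card_seteq[OF ss_finite[OF fP fQ] tr2] by simp
      have lt: "card Q' < card Q" using e(2) unfolding Q'_def .
      have q2: "card Q' \<ge> 2" using e(1) unfolding Q'_def .
      have qp: "card Q' \<le> card P'" using tr1 lt ba by linarith
      have cr: "card P' + card Q' = card (ss P' Q') + 1" using tr1 crit eqss by simp
      from less.hyps[OF lt fin' q2 qp cr small']
      show ?thesis using eqss by simp
    next
      case False
      have full: "{x\<in>Q. x + e \<in> P} = Q" if "card {x\<in>Q. x + e \<in> P} \<ge> 2" for e
      proof -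
        have sub: "{x\<in>Q. x + e \<in> P} \<subseteq> Q" by blast
        have "card Q \<le> card {x\<in>Q. x + e \<in> P}" using False that by (simp add: not_less)
        from card_seteq[OF fQ sub this] show ?thesis .
      qed
      define T where "T = {e. \<forall>x\<in>Q. x + e \<in> P}"
      obtain q0 where q0: "q0 \<in> Q" using Qne by blast
      have Tsub: "T \<subseteq> (\<lambda>p. p - q0) ` P"
      proof
        fix e assume "e \<in> T"
        then have "q0 + e \<in> P" using q0 unfolding T_def by blast
        moreover have "e = (q0 + e) - q0" by simp
        ultimately show "e \<in> (\<lambda>p. p - q0) ` P" by blast
      qed
      have fT: "finite T" using finite_subset[OF Tsub] fP by blast
      define U where "U = {pq \<in> P \<times> Q. card {x\<in>Q. x + (fst pq - snd pq) \<in> P} \<le> 1}"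
      define V where "V = {pq \<in> P \<times> Q. fst pq - snd pq \<in> T}"
      have cover: "P \<times> Q \<subseteq> U \<union> V"
      proof
        fix pq assume pq: "pq \<in> P \<times> Q"
        show "pq \<in> U \<union> V"
        proof (cases "card {x\<in>Q. x + (fst pq - snd pq) \<in> P} \<le> 1")
          case True then show ?thesis using pq unfolding U_def by blast
        next
          case False
          then have "{x\<in>Q. x + (fst pq - snd pq) \<in> P} = Q" using full by simp
          then have "fst pq - snd pq \<in> T" unfolding T_def by blast
          then show ?thesis using pq unfolding V_def by blast
        qed
      qed
      have fPQ: "finite (P \<times> Q)" using fP fQ by simp
      have fU: "finite U" "finite V" unfolding U_def V_def using fPQ by auto
      have Vsub: "V \<subseteq> (\<lambda>(e,q). (q + e, q)) ` (T \<times> Q)"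
      proof
        fix pq assume "pq \<in> V"
        then obtain p q where pq: "pq = (p, q)" "p \<in> P" "q \<in> Q" "p - q \<in> T" unfolding V_def by auto
        have "(p, q) = (\<lambda>(e,q). (q + e, q)) (p - q, q)" by simp
        then show "pq \<in> (\<lambda>(e,q). (q + e, q)) ` (T \<times> Q)" using pq by blast
      qed
      have cV: "card V \<le> card T * card Q"
      proof -
        have "card V \<le> card ((\<lambda>(e,q). (q + e, q)) ` (T \<times> Q))"
          using card_mono[OF _ Vsub] fT fQ by simp
        also have "\<dots> \<le> card (T \<times> Q)" by (rule card_image_le) (use fT fQ in simp)
        also have "\<dots> = card T * card Q" by (simp add: card_cartesian_product)
        finally show ?thesis .
      qed
      have injU: "inj_on snd U"
      proof (rule inj_onI)
        fix x y assume x: "x \<in> U" and y: "y \<in> U" and s: "snd x = snd y"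
        obtain p0 q where xx: "x = (p0, q)" "p0 \<in> P" "q \<in> Q"
          "card {z\<in>Q. z + (p0 - q) \<in> P} \<le> 1" using x unfolding U_def by auto
        obtain p1 where yy: "y = (p1, q)" "p1 \<in> P"
          "card {z\<in>Q. z + (p1 - q) \<in> P} \<le> 1" using y s xx unfolding U_def by auto
        have "p0 = p1" using bad_inj[OF fP fQ b2 crit small xx(3) xx(2) yy(2) xx(4) yy(3)] .
        then show "x = y" using xx yy by simp
      qed
      have cU: "card U \<le> card Q"
      proof -
        have "card U = card (snd ` U)" using card_image[OF injU] by simp
        also have "\<dots> \<le> card Q"
        proof -
          have "snd ` U \<subseteq> Q" unfolding U_def by auto
          then show ?thesis using card_mono[OF fQ] by blast
        qed
        finally show ?thesis .
      qed
      have "card P * card Q \<le> card (U \<union> V)"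
        using card_mono[OF _ cover] fU by (simp add: card_cartesian_product)
      also have "\<dots> \<le> card U + card V" by (rule card_Un_le)
      finally have "card P * card Q \<le> (1 + card T) * card Q" using cU cV by simp
      then have cPT: "card P \<le> 1 + card T" using b3 mult_le_cancel2[of "card P" "card Q" "1 + card T"] by simp
      have Tne: "T \<noteq> {}"
      proof
        assume "T = {}"
        then have "card P \<le> 1" using cPT by simp
        then show False using ba b3 by linarith
      qed
      have sTQ: "ss T Q \<subseteq> P"
      proof
        fix y assume "y \<in> ss T Q"
        then obtain e x where ex: "e \<in> T" "x \<in> Q" "y = e + x" by (auto simp: ss_mem)
        then have "x + e \<in> P" unfolding T_def by blast
        then show "y \<in> P" using ex(3) by (simp add: add.commute)
      qed
      have "card (ss T Q) \<le> card P" using card_mono[OF fP sTQ] .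
      moreover have "card P \<le> card (ss P Q)" using card_le_ss[OF fP fQ q0] .
      ultimately have "enat (card (ss T Q)) \<le> enat (card (ss P Q))" by simp
      then have smT: "enat (card (ss T Q)) < pG TYPE('a)" using small by (rule le_less_trans)
      have "card T + card Q \<le> card (ss T Q) + 1" using cauchy_davenport[OF fT fQ Tne Qne smT] .
      then show ?thesis using cPT b3 \<open>card (ss T Q) \<le> card P\<close> by linarith
    qed
  qed
qed

lemma vosper_lite:
  fixes P Q :: "'a::ab_group_add set"
  assumes "finite P" "finite Q" "card P \<ge> 2" "card Q \<ge> 2"
    "card P + card Q = card (ss P Q) + 1" "enat (card (ss P Q)) < pG TYPE('a)"
  shows "progression (ss P Q)"
proof (cases "card Q \<le> card P")
  case True then show ?thesis using vl_aux assms by blast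
next
  case False
  then have "progression (ss Q P)" using vl_aux[of Q P] assms ss_comm[of P Q] by simp
  then show ?thesis using ss_comm by metis
qed

definition nbr :: "('a \<Rightarrow> 'b \<Rightarrow> bool) \<Rightarrow> 'b set \<Rightarrow> 'a set \<Rightarrow> 'b set" where
  "nbr R E S = {b\<in>E. \<exists>a\<in>S. R a b}"
definition mtch :: "('a \<Rightarrow> 'b \<Rightarrow> bool) \<Rightarrow> 'a set \<Rightarrow> 'b set \<Rightarrow> bool" where
  "mtch R A B \<longleftrightarrow> (\<exists>f. bij_betw f A B \<and> (\<forall>a\<in>A. R a (f a)))"

lemma mtch_empty: "mtch R {} {}"
  unfolding mtch_def by (auto simp: bij_betw_def)

lemma mtch_union:
  assumes "mtch R A1 B1" "mtch R A2 B2" "A1 \<inter> A2 = {}" "B1 \<inter> B2 = {}"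
  shows "mtch R (A1 \<union> A2) (B1 \<union> B2)"
proof -
  obtain f1 where f1: "bij_betw f1 A1 B1" "\<forall>a\<in>A1. R a (f1 a)" using assms(1) unfolding mtch_def by blast
  obtain f2 where f2: "bij_betw f2 A2 B2" "\<forall>a\<in>A2. R a (f2 a)" using assms(2) unfolding mtch_def by blast
  define g where "g = (\<lambda>a. if a \<in> A1 then f1 a else f2 a)"
  have g1: "bij_betw g A1 B1" using f1(1) bij_betw_cong[of A1 g f1 B1] unfolding g_def by simp
  have "bij_betw g A2 B2 = bij_betw f2 A2 B2"
    by (rule bij_betw_cong) (use assms(3) in \<open>auto simp: g_def\<close>)
  then have g2: "bij_betw g A2 B2" using f2(1) by simp
  have "bij_betw g (A1 \<union> A2) (B1 \<union> B2)" using bij_betw_combine[OF g1 g2 assms(4)] .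
  moreover have "\<forall>a\<in>A1 \<union> A2. R a (g a)" using f1(2) f2(2) assms(3) unfolding g_def by auto
  ultimately show ?thesis unfolding mtch_def by blast
qed

lemma mtch_single: "R a b \<Longrightarrow> mtch R {a} {b}"
  unfolding mtch_def by (rule exI[of _ "\<lambda>_. b"]) simp

lemma mtch_insert:
  assumes "mtch R A B" "a \<notin> A" "b \<notin> B" "R a b"
  shows "mtch R (insert a A) (insert b B)"
  using mtch_union[OF mtch_single[of R a b, OF assms(4)] assms(1)] assms(2,3) by simp

lemma mtch_card: "mtch R A B \<Longrightarrow> card A = card B"
  unfolding mtch_def using bij_betw_same_card by blast

lemma mtch_sub: "mtch R A B \<Longrightarrow> B \<subseteq> E \<Longrightarrow> B \<subseteq> nbr R E A"
  unfolding mtch_def nbr_def bij_betw_def by auto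

lemma nbr_sub: "nbr R E S \<subseteq> E" unfolding nbr_def by auto
lemma nbr_mono: "S \<subseteq> T \<Longrightarrow> nbr R E S \<subseteq> nbr R E T" unfolding nbr_def by auto
lemma nbr_Un: "nbr R E (S \<union> T) = nbr R E S \<union> nbr R E T" unfolding nbr_def by auto
lemma nbr_diff: "nbr R (E - X) S = nbr R E S - X" unfolding nbr_def by auto
lemma nbr_empty: "nbr R E {} = {}" unfolding nbr_def by auto

lemma hall_split:
  assumes fE: "finite E" and fA: "finite A" and SA: "S \<subseteq> A"
    and H: "\<forall>T\<subseteq>A. card T \<le> card (nbr R E T)" and tight: "card (nbr R E S) \<le> card S"
  shows "\<forall>T\<subseteq>A - S. card T \<le> card (nbr R (E - nbr R E S) T)"
proof (intro allI impI)
  fix T assume T: "T \<subseteq> A - S"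
  have fN: "finite (nbr R E X)" for X using finite_subset[OF nbr_sub fE] .
  have eq: "nbr R (E - nbr R E S) T = nbr R E (T \<union> S) - nbr R E S"
    unfolding nbr_diff nbr_Un by blast
  have "nbr R E S \<subseteq> nbr R E (T \<union> S)" by (rule nbr_mono) blast
  then have c1: "card (nbr R E (T \<union> S) - nbr R E S) = card (nbr R E (T \<union> S)) - card (nbr R E S)"
    by (rule card_Diff_subset[OF fN])
  have "T \<union> S \<subseteq> A" using T SA by blast
  then have c2: "card (T \<union> S) \<le> card (nbr R E (T \<union> S))" using H by simp
  have "T \<subseteq> A" using T by blast
  have fT: "finite T" "finite S" using finite_subset[OF \<open>T \<subseteq> A\<close> fA] finite_subset[OF SA fA] by auto
  have "T \<inter> S = {}" using T by blast
  then have c3: "card (T \<union> S) = card T + card S" by (rule card_Un_disjoint[OF fT])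
  show "card T \<le> card (nbr R (E - nbr R E S) T)"
    unfolding eq c1 using c2 c3 tight by linarith
qed

lemma allsubD: "\<forall>S\<subseteq>A. P S \<Longrightarrow> T \<subseteq> A \<Longrightarrow> P T" by blast

lemma hall:
  assumes "finite A" "finite E" "\<forall>S\<subseteq>A. card S \<le> card (nbr R E S)"
  shows "\<exists>B\<subseteq>E. mtch R A B"
  using assms
proof (induction "card A" arbitrary: A E rule: less_induct)
  case less
  note fA = less.prems(1) and fE = less.prems(2) and H = less.prems(3)
  show ?case
  proof (cases "A = {}")
    case True then show ?thesis using mtch_empty by blast
  next
    case False
    show ?thesis
    proof (cases "\<exists>S. S \<subseteq> A \<and> S \<noteq> {} \<and> S \<noteq> A \<and> card (nbr R E S) \<le> card S")
      case True
      then obtain S where S: "S \<subseteq> A" "S \<noteq> {}" "S \<noteq> A" "card (nbr R E S) \<le> card S" by blast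
      have fS: "finite S" using finite_subset[OF S(1) fA] .
      have ltS: "card S < card A" using S(1,3) fA by (simp add: psubset_card_mono)
      have HS: "\<forall>T\<subseteq>S. card T \<le> card (nbr R E T)" using H S(1) by auto
      obtain B1 where B1: "B1 \<subseteq> E" "mtch R S B1" using less.hyps[OF ltS fS fE HS] by blast
      have B1N: "B1 \<subseteq> nbr R E S" using mtch_sub[OF B1(2) B1(1)] .
      have H2: "\<forall>T\<subseteq>A - S. card T \<le> card (nbr R (E - nbr R E S) T)"
        using hall_split[OF fE fA S(1) H S(4)] .
      have fAS: "finite (A - S)" using fA by simp
      have fE': "finite (E - nbr R E S)" using fE by simp
      have "card (A - S) = card A - card S" using card_Diff_subset[OF fS S(1)] .
      moreover have "card S > 0" using fS S(2) by (simp add: card_gt_0_iff)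
      ultimately have ltAS: "card (A - S) < card A" using ltS by linarith
      obtain B2 where B2: "B2 \<subseteq> E - nbr R E S" "mtch R (A - S) B2"
        using less.hyps[OF ltAS fAS fE' H2] by blast
      have "B1 \<inter> B2 = {}" using B1N B2(1) by blast
      then have m: "mtch R (S \<union> (A - S)) (B1 \<union> B2)" using mtch_union[OF B1(2) B2(2)] by blast
      have "S \<union> (A - S) = A" using S(1) by blast
      then have m2: "mtch R A (B1 \<union> B2)" using m by simp
      have "B1 \<union> B2 \<subseteq> E" using B1(1) B2(1) by blast
      then show ?thesis using m2 by blast
    next
      case nt: False
      obtain a0 where a0: "a0 \<in> A" using False by blast
      have "{a0} \<subseteq> A" using a0 by simp
      from allsubD[OF H this] have "card {a0} \<le> card (nbr R E {a0})" .
      then have "nbr R E {a0} \<noteq> {}" by auto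
      then obtain b0 where b0: "b0 \<in> E" "R a0 b0" unfolding nbr_def by blast
      define A' where "A' = A - {a0}"
      define E' where "E' = E - {b0}"
      have fA': "finite A'" "finite E'" unfolding A'_def E'_def using fA fE by auto
      have lt: "card A' < card A" unfolding A'_def by (rule card_Diff1_less[OF fA a0])
      have H': "\<forall>T\<subseteq>A'. card T \<le> card (nbr R E' T)"
      proof (intro allI impI)
        fix T assume T: "T \<subseteq> A'"
        show "card T \<le> card (nbr R E' T)"
        proof (cases "T = {}")
          case True then show ?thesis by simp
        next
          case Tne: False
          have "T \<subseteq> A" "T \<noteq> A" using T a0 unfolding A'_def by auto
          then have "card T < card (nbr R E T)" using nt Tne by (meson not_le)
          moreover have "nbr R E' T = nbr R E T - {b0}" unfolding E'_def nbr_diff ..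
          then have "card (nbr R E' T) = card (nbr R E T - {b0})" by simp
          moreover have "card (nbr R E T - {b0}) \<ge> card (nbr R E T) - 1"
            using diff_card_le_card_Diff[of "{b0}" "nbr R E T"] by simp
          ultimately show ?thesis by linarith
        qed
      qed
      obtain B' where B': "B' \<subseteq> E'" "mtch R A' B'" using less.hyps[OF lt fA' H'] by blast
      have "b0 \<notin> B'" using B'(1) unfolding E'_def by blast
      have "a0 \<notin> A'" unfolding A'_def by blast
      have m: "mtch R (insert a0 A') (insert b0 B')" using mtch_insert[OF B'(2) \<open>a0 \<notin> A'\<close> \<open>b0 \<notin> B'\<close> b0(2)] .
      have "insert a0 A' = A" unfolding A'_def using a0 by blast
      then have m2: "mtch R A (insert b0 B')" using m by simp
      have "insert b0 B' \<subseteq> E" using b0(1) B'(1) unfolding E'_def by blast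
      then show ?thesis using m2 by blast
    qed
  qed
qed

lemma card_ge2_obtain:
  assumes "finite X" "card X \<ge> 2"
  obtains b c where "b \<in> X" "c \<in> X" "b \<noteq> c"
proof -
  have "X \<noteq> {}" using assms by auto
  then obtain b where b: "b \<in> X" by blast
  have "card (X - {b}) \<ge> 1" using assms b by simp
  then have "X - {b} \<noteq> {}" by (metis card.empty not_one_le_zero)
  then obtain c where "c \<in> X - {b}" by blast
  then show ?thesis using that b by blast
qed

lemma two_bases:
  assumes "finite A" "finite E" "\<forall>S\<subseteq>A. card S \<le> card (nbr R E S)" "A \<noteq> {}"
    "card A < card (nbr R E A)"
  shows "\<exists>C b c. C \<subseteq> E \<and> b \<in> E \<and> c \<in> E \<and> b \<noteq> c \<and> b \<notin> C \<and> c \<notin> C \<and>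
           mtch R A (insert b C) \<and> mtch R A (insert c C)"
  using assms
proof (induction "card A" arbitrary: A E rule: less_induct)
  case less
  note fA = less.prems(1) and fE = less.prems(2) and H = less.prems(3) and Ane = less.prems(4)
    and sur = less.prems(5)
  have fN: "finite (nbr R E X)" for X using finite_subset[OF nbr_sub fE] .
  show ?case
  proof (cases "\<exists>S. S \<subseteq> A \<and> S \<noteq> {} \<and> S \<noteq> A \<and> card (nbr R E S) \<le> card S")
    case True
    then obtain S where S: "S \<subseteq> A" "S \<noteq> {}" "S \<noteq> A" "card (nbr R E S) \<le> card S" by blast
    have fS: "finite S" using finite_subset[OF S(1) fA] .
    have HS: "\<forall>T\<subseteq>S. card T \<le> card (nbr R E T)" using H S(1) by auto
    obtain B1 where B1: "B1 \<subseteq> E" "mtch R S B1" using hall[OF fS fE HS] by blast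
    have B1N: "B1 \<subseteq> nbr R E S" using mtch_sub[OF B1(2) B1(1)] .
    define E' where "E' = E - nbr R E S"
    have H2: "\<forall>T\<subseteq>A - S. card T \<le> card (nbr R E' T)"
      unfolding E'_def using hall_split[OF fE fA S(1) H S(4)] .
    have fAS: "finite (A - S)" using fA by simp
    have fE': "finite E'" using fE unfolding E'_def by simp
    have cAS: "card (A - S) = card A - card S" using card_Diff_subset[OF fS S(1)] .
    have "card S > 0" using fS S(2) by (simp add: card_gt_0_iff)
    have "card S \<le> card A" using card_mono[OF fA S(1)] .
    then have ltAS: "card (A - S) < card A" using cAS \<open>card S > 0\<close> by linarith
    have ASne: "A - S \<noteq> {}" using S(1,3) by blast
    have "nbr R E' (A - S) = nbr R E A - nbr R E S"
    proof -
      have eqA: "A = (A - S) \<union> S" using S(1) by blast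
      have "nbr R E A = nbr R E ((A - S) \<union> S)" using arg_cong[OF eqA, of "nbr R E"] .
      then have "nbr R E A = nbr R E (A - S) \<union> nbr R E S" unfolding nbr_Un .
      then show ?thesis unfolding E'_def nbr_diff by blast
    qed
    moreover have "nbr R E S \<subseteq> nbr R E A" using nbr_mono[OF S(1)] .
    ultimately have cN: "card (nbr R E' (A - S)) = card (nbr R E A) - card (nbr R E S)"
      using card_Diff_subset[OF fN] by simp
    have "card (nbr R E S) \<le> card (nbr R E A)" using card_mono[OF fN \<open>nbr R E S \<subseteq> nbr R E A\<close>] .
    have surAS: "card (A - S) < card (nbr R E' (A - S))"
      unfolding cN cAS using sur S(4) \<open>card S \<le> card A\<close> \<open>card (nbr R E S) \<le> card (nbr R E A)\<close>
      by linarith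
    obtain C' b c where Cbc: "C' \<subseteq> E'" "b \<in> E'" "c \<in> E'" "b \<noteq> c" "b \<notin> C'" "c \<notin> C'"
      "mtch R (A - S) (insert b C')" "mtch R (A - S) (insert c C')"
      using less.hyps[OF ltAS fAS fE' H2 ASne surAS] by blast
    have dj: "(A - S) \<inter> S = {}" by blast
    have AU: "(A - S) \<union> S = A" using S(1) by blast
    have mb: "mtch R A (insert b (C' \<union> B1))"
    proof -
      have "insert b C' \<inter> B1 = {}" using Cbc(1,2) B1N unfolding E'_def by blast
      from mtch_union[OF Cbc(7) B1(2) dj this] show ?thesis using AU by simp
    qed
    have mc: "mtch R A (insert c (C' \<union> B1))"
    proof -
      have "insert c C' \<inter> B1 = {}" using Cbc(1,3) B1N unfolding E'_def by blast
      from mtch_union[OF Cbc(8) B1(2) dj this] show ?thesis using AU by simp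
    qed
    have "C' \<union> B1 \<subseteq> E" "b \<in> E" "c \<in> E" "b \<notin> C' \<union> B1" "c \<notin> C' \<union> B1"
      using Cbc B1 B1N unfolding E'_def by blast+
    then show ?thesis using mb mc Cbc(4) by blast
  next
    case nt: False
    obtain a0 where a0: "a0 \<in> A" using Ane by blast
    show ?thesis
    proof (cases "A = {a0}")
      case True
      then have "card (nbr R E {a0}) \<ge> 2" using sur by simp
      then obtain b c where bc: "b \<in> nbr R E {a0}" "c \<in> nbr R E {a0}" "b \<noteq> c"
        using card_ge2_obtain[OF fN] by blast
      have "R a0 b" "R a0 c" "b \<in> E" "c \<in> E" using bc unfolding nbr_def by auto
      then have "mtch R A (insert b {})" "mtch R A (insert c {})" using mtch_single True by auto
      then show ?thesis using \<open>b \<in> E\<close> \<open>c \<in> E\<close> bc(3) by blast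
    next
      case False
      define A' where "A' = A - {a0}"
      have A'ne: "A' \<noteq> {}" using False a0 unfolding A'_def by blast
      have A'A: "A' \<subseteq> A" "A' \<noteq> A" using a0 unfolding A'_def by auto
      have surA': "card A' < card (nbr R E A')" using nt A'ne A'A by (meson not_le)
      have "{a0} \<subseteq> A" using a0 by simp
      from allsubD[OF H this] have "card {a0} \<le> card (nbr R E {a0})" .
      then have "nbr R E {a0} \<noteq> {}" by auto
      then obtain b1 where b1: "b1 \<in> nbr R E {a0}" by blast
      obtain b0 where b0: "b0 \<in> nbr R E {a0}"
        and b0c: "b0 \<notin> nbr R E A' \<or> nbr R E {a0} \<subseteq> nbr R E A'"
      proof (cases "nbr R E {a0} \<subseteq> nbr R E A'")
        case True then show ?thesis using that b1 by blast
      next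
        case False then show ?thesis using that by blast
      qed
      have b0E: "b0 \<in> E" "R a0 b0" using b0 unfolding nbr_def by auto
      define E' where "E' = E - {b0}"
      have fA': "finite A'" "finite E'" unfolding A'_def E'_def using fA fE by auto
      have lt: "card A' < card A" unfolding A'_def by (rule card_Diff1_less[OF fA a0])
      have cm: "card (nbr R E' T) \<ge> card (nbr R E T) - 1" for T
      proof -
        have "nbr R E' T = nbr R E T - {b0}" unfolding E'_def nbr_diff ..
        then have "card (nbr R E' T) = card (nbr R E T - {b0})" by simp
        moreover have "card (nbr R E T - {b0}) \<ge> card (nbr R E T) - 1"
          using diff_card_le_card_Diff[of "{b0}" "nbr R E T"] by simp
        ultimately show ?thesis by linarith
      qed
      have H': "\<forall>T\<subseteq>A'. card T \<le> card (nbr R E' T)"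
      proof (intro allI impI)
        fix T assume T: "T \<subseteq> A'"
        show "card T \<le> card (nbr R E' T)"
        proof (cases "T = {}")
          case True then show ?thesis by simp
        next
          case Tne: False
          have "T \<subseteq> A" "T \<noteq> A" using T a0 unfolding A'_def by auto
          then have "card T < card (nbr R E T)" using nt Tne by (meson not_le)
          then show ?thesis using cm[of T] by linarith
        qed
      qed
      have surE': "card A' < card (nbr R E' A')"
      proof (cases "b0 \<notin> nbr R E A'")
        case True
        then have "nbr R E' A' = nbr R E A'" unfolding E'_def nbr_diff by blast
        then show ?thesis using surA' by simp
      next
        case False
        then have sub: "nbr R E {a0} \<subseteq> nbr R E A'" using b0c by blast
        have eqA: "A = {a0} \<union> A'" using a0 unfolding A'_def by blast
        have "nbr R E A = nbr R E ({a0} \<union> A')" using arg_cong[OF eqA, of "nbr R E"] .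
        then have "nbr R E A = nbr R E A'" unfolding nbr_Un using sub by blast
        moreover have "card A = card A' + 1" using lt unfolding A'_def using fA a0
          by (simp add: card_Diff_singleton)
        ultimately have "card A' + 1 < card (nbr R E A')" using sur by simp
        then show ?thesis using cm[of A'] by linarith
      qed
      obtain C' b c where Cbc: "C' \<subseteq> E'" "b \<in> E'" "c \<in> E'" "b \<noteq> c" "b \<notin> C'" "c \<notin> C'"
        "mtch R A' (insert b C')" "mtch R A' (insert c C')"
        using less.hyps[OF lt fA' H' A'ne surE'] by blast
      have a0n: "a0 \<notin> A'" unfolding A'_def by blast
      have ins: "insert a0 A' = A" unfolding A'_def using a0 by blast
      have "b0 \<notin> insert b C'" "b0 \<notin> insert c C'" using Cbc(1,2,3) unfolding E'_def by blast+
      then have mb: "mtch R A (insert b0 (insert b C'))" and mc: "mtch R A (insert b0 (insert c C'))"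
        using mtch_insert[OF Cbc(7) a0n _ b0E(2)] mtch_insert[OF Cbc(8) a0n _ b0E(2)] ins by auto
      have "insert b0 C' \<subseteq> E" "b \<in> E" "c \<in> E" "b \<notin> insert b0 C'" "c \<notin> insert b0 C'"
        using Cbc b0E(1) unfolding E'_def by blast+
      moreover have "mtch R A (insert b (insert b0 C'))" "mtch R A (insert c (insert b0 C'))"
        using mb mc by (simp_all add: insert_commute)
      ultimately show ?thesis using Cbc(4) by blast
    qed
  qed
qed

lemma indep_sub: "matroid E I \<Longrightarrow> I X \<Longrightarrow> X \<subseteq> E"
  unfolding matroid_def by blast

lemma indep_finite: "matroid E I \<Longrightarrow> I X \<Longrightarrow> finite X"
  unfolding matroid_def by (meson finite_subset)

lemma indep_augment: "matroid E I \<Longrightarrow> I X \<Longrightarrow> I Y \<Longrightarrow> card X < card Y \<Longrightarrow> \<exists>y\<in>Y - X. I (insert y X)"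
  unfolding matroid_def by blast

lemma indep_empty: "matroid E I \<Longrightarrow> I {}"
  unfolding matroid_def by blast

lemma mrank_fin:
  assumes "matroid E I"
  shows "finite (card ` Collect I)" "card ` Collect I \<noteq> {}"
proof -
  have "Collect I \<subseteq> Pow E" using indep_sub[OF assms] by blast
  moreover have "finite E" using assms unfolding matroid_def by blast
  ultimately show "finite (card ` Collect I)" by (meson finite_Pow_iff finite_imageI finite_subset)
  show "card ` Collect I \<noteq> {}" using indep_empty[OF assms] by blast
qed

lemma mrank_ge: assumes "matroid E I" "I Y" shows "card Y \<le> mrank E I"
  unfolding mrank_def by (rule Max_ge[OF mrank_fin(1)[OF assms(1)]]) (use assms(2) in blast)

lemma mrank_ex:
  assumes "matroid E I" shows "\<exists>X. I X \<and> card X = mrank E I"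
proof -
  have "Max (card ` Collect I) \<in> card ` Collect I" using mrank_fin[OF assms] by (rule Max_in)
  then show ?thesis unfolding mrank_def by auto
qed

lemma basis_card:
  assumes M: "matroid E I" and B: "basis E I B" shows "card B = mrank E I"
proof -
  obtain X where X: "I X" "card X = mrank E I" using mrank_ex[OF M] by blast
  have IB: "I B" using B unfolding basis_def by blast
  have "\<not> card B < card X"
  proof
    assume "card B < card X"
    then obtain y where y: "y \<in> X - B" "I (insert y B)" using indep_augment[OF M IB X(1)] by blast
    then have "insert y B = B" using B unfolding basis_def by blast
    then show False using y(1) by blast
  qed
  then show ?thesis using mrank_ge[OF M IB] X(2) by linarith
qed

lemma basis_of_card:
  assumes M: "matroid E I" and X: "I X" "card X = mrank E I" shows "basis E I X"
  unfolding basis_def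
proof (intro conjI allI impI)
  show "I X" by fact
  fix Y assume Y: "I Y \<and> X \<subseteq> Y"
  have "finite Y" using indep_finite[OF M] Y by blast
  moreover have "card Y \<le> card X" using mrank_ge[OF M] Y X(2) by simp
  ultimately show "Y = X" using card_seteq Y by blast
qed

lemma basis_ex: "matroid E I \<Longrightarrow> \<exists>B. basis E I B"
  using mrank_ex basis_of_card by blast

lemma dual_rank:
  assumes M: "matroid E I" shows "mrank E (dual_indep E I) = card E - mrank E I"
proof -
  have fE: "finite E" using M unfolding matroid_def by blast
  obtain B where B: "basis E I B" using basis_ex[OF M] by blast
  have BE: "B \<subseteq> E" using B indep_sub[OF M] unfolding basis_def by blast
  have cB: "card B = mrank E I" using basis_card[OF M B] .
  have d1: "dual_indep E I (E - B)" unfolding dual_indep_def using B by blast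
  have c1: "card (E - B) = card E - mrank E I" using card_Diff_subset[OF finite_subset[OF BE fE] BE] cB by simp
  have le: "card X \<le> card E - mrank E I" if dX: "dual_indep E I X" for X
  proof -
    obtain B' where B': "X \<subseteq> E" "basis E I B'" "X \<inter> B' = {}" using dX unfolding dual_indep_def by blast
    have B'E: "B' \<subseteq> E" using B'(2) indep_sub[OF M] unfolding basis_def by blast
    have "X \<subseteq> E - B'" using B' by blast
    then have "card X \<le> card (E - B')" using fE by (simp add: card_mono)
    also have "\<dots> = card E - card B'" using card_Diff_subset[OF finite_subset[OF B'E fE] B'E] .
    also have "\<dots> = card E - mrank E I" using basis_card[OF M B'(2)] by simp
    finally show ?thesis .
  qed
  have "Collect (dual_indep E I) \<subseteq> Pow E" unfolding dual_indep_def by blast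
  then have fin: "finite (card ` Collect (dual_indep E I))" using fE
    by (meson finite_Pow_iff finite_imageI finite_subset)
  have "Max (card ` Collect (dual_indep E I)) = card E - mrank E I"
  proof (rule Max_eqI[OF fin])
    fix y assume "y \<in> card ` Collect (dual_indep E I)"
    then show "y \<le> card E - mrank E I" using le by auto
  next
    show "card E - mrank E I \<in> card ` Collect (dual_indep E I)" using d1 c1 by (metis imageI mem_Collect_eq)
  qed
  then show ?thesis by (simp only: mrank_def[of E "dual_indep E I"])
qed

lemma sp_exchange:
  assumes M: "matroid E I" and SP: "sparse_paving E I" and r: "mrank E I = n"
    and C: "C \<subseteq> E" "b \<in> E" "c \<in> E" "b \<noteq> c" "b \<notin> C" "c \<notin> C" "card (insert b C) = n"
  shows "I (insert b C) \<or> I (insert c C)"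
proof (rule ccontr)
  assume neither: "\<not> (I (insert b C) \<or> I (insert c C))"
  have fE: "finite E" using M unfolding matroid_def by blast
  have fC: "finite C" using finite_subset[OF C(1) fE] .
  have cC: "card C = n - 1" "n \<ge> 1" using C(5,7) fC by auto
  have IC: "I C" using SP C(1) cC r unfolding sparse_paving_def paving_def by blast
  define D where "D = insert b (insert c C)"
  have DE: "D \<subseteq> E" unfolding D_def using C by blast
  have cD: "card D = n + 1" unfolding D_def using C fC cC by simp
  define Z where "Z = E - D"
  have cZ: "card Z = card E - (n + 1)" unfolding Z_def using card_Diff_subset[OF finite_subset[OF DE fE] DE] cD by simp
  have "card D \<le> card E" using card_mono[OF fE DE] .
  then have "card Z = mrank E (dual_indep E I) - 1" using cZ dual_rank[OF M] r cD by simp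
  then have "dual_indep E I Z" using SP unfolding sparse_paving_def paving_def Z_def by blast
  then obtain W where W: "basis E I W" "Z \<inter> W = {}" unfolding dual_indep_def by blast
  have IW: "I W" using W(1) unfolding basis_def by blast
  have "W \<subseteq> E" using indep_sub[OF M IW] .
  then have WD: "W \<subseteq> D" using W(2) unfolding Z_def by blast
  have "card W = n" using basis_card[OF M W(1)] r by simp
  then have "card C < card W" using cC by simp
  then obtain y where y: "y \<in> W - C" "I (insert y C)" using indep_augment[OF M IC IW] by blast
  then have "y = b \<or> y = c" using WD unfolding D_def by blast
  then show False using y(2) neither by blast
qed

lemma finish:
  assumes M: "matroid EN IN" and LL: "loopless EN IN" and SP: "sparse_paving EN IN"
    and r: "mrank EN IN = n" and fA: "finite A" and cA: "card A = n"
    and H: "\<forall>S\<subseteq>A. card S \<le> card (nbr R EN S)"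
    and alt: "n \<le> 1 \<or> n = card EN \<or> card A < card (nbr R EN A)"
  shows "\<exists>B. basis EN IN B \<and> mtch R A B"
proof -
  have fE: "finite EN" using M unfolding matroid_def by blast
  have good: "basis EN IN B" if "IN B" "mtch R A B" for B
    using basis_of_card[OF M that(1)] mtch_card[OF that(2)] cA r by simp
  obtain B0 where B0: "B0 \<subseteq> EN" "mtch R A B0" using hall[OF fA fE H] by blast
  have cB0: "card B0 = n" using mtch_card[OF B0(2)] cA by simp
  consider "n = 0" | "n = 1" | "n = card EN" | "n \<ge> 1" "card A < card (nbr R EN A)"
    using alt by linarith
  then show ?thesis
  proof cases
    case 1
    then have "A = {}" using cA fA by simp
    have "finite B0" using finite_subset[OF B0(1) fE] .
    then have "B0 = {}" using cB0 1 by simp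
    then have "IN B0" using indep_empty[OF M] by simp
    then show ?thesis using good B0 by blast
  next
    case 2
    then obtain b where b: "B0 = {b}" using cB0 by (auto simp: card_1_singleton_iff)
    then have "b \<in> EN" using B0(1) by simp
    then have "IN B0" using LL b unfolding loopless_def by simp
    then show ?thesis using good B0 by blast
  next
    case 3
    have "B0 = EN" using card_seteq[OF fE B0(1)] cB0 3 by simp
    obtain X where X: "IN X" "card X = mrank EN IN" using mrank_ex[OF M] by blast
    have "X = EN" using card_seteq[OF fE indep_sub[OF M X(1)]] X(2) r 3 by simp
    then have "IN B0" using X(1) \<open>B0 = EN\<close> by simp
    then show ?thesis using good B0 by blast
  next
    case 4
    have Ane: "A \<noteq> {}" using 4 cA by auto
    obtain C b c where Cbc: "C \<subseteq> EN" "b \<in> EN" "c \<in> EN" "b \<noteq> c" "b \<notin> C" "c \<notin> C"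
      "mtch R A (insert b C)" "mtch R A (insert c C)"
      using two_bases[OF fA fE H Ane 4(2)] by blast
    have "card (insert b C) = n" using mtch_card[OF Cbc(7)] cA by simp
    then have "IN (insert b C) \<or> IN (insert c C)" using sp_exchange[OF M SP r Cbc(1-6)] by blast
    then show ?thesis using good Cbc(7,8) by blast
  qed
qed

theorem theorem2p3:
  fixes EM EN :: "'a::ab_group_add set"
    and IM IN :: "'a set \<Rightarrow> bool"
    and n :: nat
  assumes "matroid EM IM" and "loopless EM IM"
    and "matroid EN IN" and "loopless EN IN"
    and "sparse_paving EN IN"
    and "mrank EM IM = n" and "mrank EN IN = n"
    and "0 \<notin> EN"
    and "enat (card EM) < min (enat (card EN - 1)) (pG TYPE('a))
       \<or> (\<not> progression EM \<and> finite (UNIV :: 'a set) \<and> card EM = card EN - 1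
           \<and> enat (card EN) < pG TYPE('a))
       \<or> (\<not> progression EM \<and> \<not> semi_progression EM \<and> finite (UNIV :: 'a set)
           \<and> card EM = card EN \<and> enat (card EN) < pG TYPE('a))
       \<or> int (card EM) < int (card EN) - int n - 1"
  shows "matched EM IM EN IN"
proof -
  have fEM: "finite EM" using assms(1) unfolding matroid_def by blast
  have fEN: "finite EN" using assms(3) unfolding matroid_def by blast
  define R :: "'a \<Rightarrow> 'a \<Rightarrow> bool" where "R = (\<lambda>a b. a + b \<notin> EM)"
  show ?thesis unfolding matched_def
  proof (intro allI impI)
    fix A assume A: "basis EM IM A"
    have IA: "IM A" using A unfolding basis_def by blast
    have AEM: "A \<subseteq> EM" using indep_sub[OF assms(1) IA] .
    have fA: "finite A" using finite_subset[OF AEM fEM] .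
    have cA: "card A = n" using basis_card[OF assms(1) A] assms(6) by simp
    define X where "X = (\<lambda>S. {b\<in>EN. \<forall>a\<in>S. a + b \<in> EM})"
    have nbrX: "nbr R EN S = EN - X S" for S unfolding nbr_def X_def R_def by auto
    have XEN: "X S \<subseteq> EN" for S unfolding X_def by auto
    have fX: "finite (X S)" for S using finite_subset[OF XEN fEN] .
    have cnbr: "card (nbr R EN S) = card EN - card (X S)" for S
      unfolding nbrX using card_Diff_subset[OF fX XEN] .
    have cXE: "card (X S) \<le> card EN" for S using card_mono[OF fEN XEN] .
    have X0: "0 \<notin> X S" for S using assms(8) XEN by blast
    have ssX: "ss (insert 0 (X S)) S \<subseteq> EM" if "S \<subseteq> A" for S
    proof
      fix y assume "y \<in> ss (insert 0 (X S)) S"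
      then obtain x s where xs: "x \<in> insert 0 (X S)" "s \<in> S" "y = x + s" unfolding ss_mem by blast
      show "y \<in> EM"
      proof (cases "x = 0")
        case True then show ?thesis using xs that AEM by auto
      next
        case False then have "x \<in> X S" using xs by simp
        then have "s + x \<in> EM" using xs(2) unfolding X_def by blast
        then show ?thesis using xs(3) by (simp add: add.commute)
      qed
    qed
    have fin0: "finite (insert 0 (X S))" for S using fX by simp
    have cdb: "card (X S) + card S \<le> card EM"
      if SA: "S \<subseteq> A" "S \<noteq> {}" and sm: "enat (card EM) < pG TYPE('a)" for S
    proof -
      have fS: "finite S" using finite_subset[OF SA(1) fA] .
      have c1: "card (ss (insert 0 (X S)) S) \<le> card EM" using card_mono[OF fEM ssX[OF SA(1)]] .
      then have "enat (card (ss (insert 0 (X S)) S)) \<le> enat (card EM)" by simp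
      then have sm': "enat (card (ss (insert 0 (X S)) S)) < pG TYPE('a)" using sm by (rule le_less_trans)
      have "card (insert 0 (X S)) + card S \<le> card (ss (insert 0 (X S)) S) + 1"
        using cauchy_davenport[OF fin0 fS _ SA(2) sm'] by simp
      moreover have "card (insert 0 (X S)) = card (X S) + 1" using fX X0 by simp
      ultimately show ?thesis using c1 by linarith
    qed
    have c4b: "card (X S) \<le> card EM" if "a \<in> S" for S a
    proof -
      have "(\<lambda>b. a + b) ` X S \<subseteq> EM" using that unfolding X_def by auto
      moreover have "inj_on (\<lambda>b. a + b) (X S)" by (simp add: inj_on_def)
      ultimately show ?thesis using card_mono[OF fEM] card_image by metis
    qed
    have cS: "card S \<le> n" if "S \<subseteq> A" for S using card_mono[OF fA that] cA by simp
    have cS1: "card S \<ge> 1" if "S \<subseteq> A" "S \<noteq> {}" for S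
      using finite_subset[OF that(1) fA] that(2) by (simp add: Suc_le_eq card_gt_0_iff)
    have gen: "(\<forall>S\<subseteq>A. card S \<le> card (nbr R EN S)) \<and> (n \<le> 1 \<or> n = card EN \<or> card A < card (nbr R EN A))"
      if k: "\<And>S. S \<subseteq> A \<Longrightarrow> S \<noteq> {} \<Longrightarrow> card (X S) + card S + 1 \<le> card EN"
    proof
      show "\<forall>S\<subseteq>A. card S \<le> card (nbr R EN S)"
      proof (intro allI impI)
        fix S assume S: "S \<subseteq> A"
        show "card S \<le> card (nbr R EN S)"
        proof (cases "S = {}")
          case True then show ?thesis by simp
        next
          case False then show ?thesis using k[OF S False] cnbr[of S] by linarith
        qed
      qed
      show "n \<le> 1 \<or> n = card EN \<or> card A < card (nbr R EN A)"
      proof (cases "A = {}")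
        case True then show ?thesis using cA by simp
      next
        case False then show ?thesis using k[OF order_refl False] cnbr[of A] by linarith
      qed
    qed
    have main: "(\<forall>S\<subseteq>A. card S \<le> card (nbr R EN S)) \<and> (n \<le> 1 \<or> n = card EN \<or> card A < card (nbr R EN A))"
    proof -
      from assms(9) consider
        (c1) "enat (card EM) < min (enat (card EN - 1)) (pG TYPE('a))"
      | (c2) "card EM = card EN - 1" "enat (card EN) < pG TYPE('a)"
      | (c3) "\<not> progression EM" "card EM = card EN" "enat (card EN) < pG TYPE('a)"
      | (c4) "int (card EM) < int (card EN) - int n - 1"
        by blast
      then show ?thesis
      proof cases
        case c1
        then have sm: "enat (card EM) < pG TYPE('a)" and lt: "enat (card EM) < enat (card EN - 1)"
          by simp_all
        from lt have lt': "card EM + 2 \<le> card EN" by simp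
        show ?thesis
        proof (rule gen)
          fix S assume "S \<subseteq> A" "S \<noteq> {}"
          from cdb[OF this sm] show "card (X S) + card S + 1 \<le> card EN" using lt' by linarith
        qed
      next
        case c2
        have "card EM \<le> card EN" using c2(1) by simp
        then have "enat (card EM) \<le> enat (card EN)" by simp
        then have sm: "enat (card EM) < pG TYPE('a)" using c2(2) by (rule le_less_trans)
        show ?thesis
        proof (rule gen)
          fix S assume S: "S \<subseteq> A" "S \<noteq> {}"
          from cdb[OF S sm] cS1[OF S] show "card (X S) + card S + 1 \<le> card EN" using c2(1) by linarith
        qed
      next
        case c3
        have sm: "enat (card EM) < pG TYPE('a)" using c3 by simp
        have H: "\<forall>S\<subseteq>A. card S \<le> card (nbr R EN S)"
        proof (intro allI impI)
          fix S assume S: "S \<subseteq> A"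
          show "card S \<le> card (nbr R EN S)"
          proof (cases "S = {}")
            case True then show ?thesis by simp
          next
            case False then show ?thesis using cdb[OF S False sm] cnbr[of S] c3(2) by linarith
          qed
        qed
        have alt: "n \<le> 1 \<or> n = card EN \<or> card A < card (nbr R EN A)"
        proof (rule ccontr)
          assume neg: "\<not> (n \<le> 1 \<or> n = card EN \<or> card A < card (nbr R EN A))"
          then have n2: "n \<ge> 2" and nE: "n \<noteq> card EN" and nb: "card (nbr R EN A) \<le> n"
            using cA by auto
          have Ane: "A \<noteq> {}" using n2 cA by auto
          have b1: "card (X A) + n \<le> card EM" using cdb[OF order_refl Ane sm] cA by simp
          have nEM: "n \<le> card EM" using card_mono[OF fEM AEM] cA by simp
          have b2: "card (X A) + n \<ge> card EM" using nb cnbr[of A] c3(2) cXE[of A] by linarith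
          define P where "P = insert 0 (X A)"
          have cP: "card P = card (X A) + 1" unfolding P_def using fX X0 by simp
          have fP: "finite P" unfolding P_def using fin0 .
          have P2: "card P \<ge> 2" using cP b1 b2 nE c3(2) nEM by linarith
          have sub: "ss P A \<subseteq> EM" unfolding P_def using ssX[OF order_refl] .
          have c1: "card (ss P A) \<le> card EM" using card_mono[OF fEM sub] .
          then have "enat (card (ss P A)) \<le> enat (card EM)" by simp
          then have sm': "enat (card (ss P A)) < pG TYPE('a)" using sm by (rule le_less_trans)
          have "P \<noteq> {}" unfolding P_def by simp
          then have cd: "card P + card A \<le> card (ss P A) + 1"
            using cauchy_davenport[OF fP fA _ Ane sm'] by simp
          have "card EM \<le> card (ss P A)" using cd cP cA b2 by linarith
          then have eq: "ss P A = EM" using card_seteq[OF fEM sub] by simp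
          have crit: "card P + card A = card (ss P A) + 1" using cd c1 cP cA b2 b1 by linarith
          have "progression (ss P A)" using vosper_lite[OF fP fA P2 _ crit sm'] n2 cA by simp
          then show False using eq c3(1) by simp
        qed
        show ?thesis using H alt by blast
      next
        case c4
        show ?thesis
        proof (rule gen)
          fix S assume S: "S \<subseteq> A" "S \<noteq> {}"
          then obtain a where "a \<in> S" by blast
          from c4b[OF this] cS[OF S(1)] show "card (X S) + card S + 1 \<le> card EN" using c4 by linarith
        qed
      qed
    qed
    have "\<exists>B. basis EN IN B \<and> mtch R A B"
      using finish[OF assms(3) assms(4) assms(5) assms(7) fA cA] main by blast
    then show "\<exists>B. basis EN IN B \<and> basis_matched EM A B"
      unfolding basis_matched_def mtch_def R_def by blast
  qed
qed

end
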